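(* Let $H\in\mathrm{C}(\mathbb{R}\times\mathbb{R})$ satisfy $\lim_{p\to\pm\infty}H(p,x)=\infty$ uniformly in $x\in\mathbb{R}$, let $x\mapsto H(p,x)$ be $1$-periodic for every $p$, and assume $H\in\mathrm{Lip}([-B,B]\times\mathbb{R})$ for every $B>0$. Then for each $\theta\in\mathbb{R}$ there exist a unique $\overline{H}(\theta)\in\mathbb{R}$ and a $1$-periodic $F_\theta\in\mathrm{C}^2(\mathbb{R})$ such that $$F_\theta''(x)+H(\theta+F_\theta'(x),x)=\overline{H}(\theta)\quad\text{for all }x\in\mathbb{R},$$ and moreover $p_-(\theta)\le\theta+F_\theta'(x)\le p_+(\theta)$ for all $x\in\mathbb{R}$.
   Context: For $\theta\in\mathbb{R}$, $U(\theta)=\max\{H(\theta,x):\,x\in[0,1]\}$, $p_-(\theta)=\min_{x\in[0,1]}\min\{p\in\mathbb{R}:\,H(p,x)\le U(\theta)\}$ and $p_+(\theta)=\max_{x\in[0,1]}\max\{p\in\mathbb{R}:\,H(p,x)\le U(\theta)\}$. Uniqueness of $\overline{H}(\theta)$ means: it is the only real number for which such a $1$-periodic $\mathrm{C}^2$ function exists. *)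

theory Defs
  imports "HOL-Analysis.Analysis"
begin

text \<open>The max/min over x in [0,1] and over p are attained (continuity, coercivity), so they are rendered via Sup/Inf (Max/Min in Isabelle are only for finite sets).\<close>

definition U_max :: "(real \<Rightarrow> real \<Rightarrow> real) \<Rightarrow> real \<Rightarrow> real" where
  "U_max H \<theta> = Sup ((\<lambda>x. H \<theta> x) ` {0..1})"

definition p_minus :: "(real \<Rightarrow> real \<Rightarrow> real) \<Rightarrow> real \<Rightarrow> real" where
  "p_minus H \<theta> = Inf ((\<lambda>x. Inf {p. H p x \<le> U_max H \<theta>}) ` {0..1})"

definition p_plus :: "(real \<Rightarrow> real \<Rightarrow> real) \<Rightarrow> real \<Rightarrow> real" where
  "p_plus H \<theta> = Sup ((\<lambda>x. Sup {p. H p x \<le> U_max H \<theta>}) ` {0..1})"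

definition periodic_C2 :: "(real \<Rightarrow> real) \<Rightarrow> (real \<Rightarrow> real) \<Rightarrow> (real \<Rightarrow> real) \<Rightarrow> bool" where
  "periodic_C2 F F1 F2 \<longleftrightarrow>
     (\<forall>x. F (x + 1) = F x) \<and>
     (\<forall>x. (F has_real_derivative F1 x) (at x)) \<and>
     (\<forall>x. (F1 has_real_derivative F2 x) (at x)) \<and>
     continuous_on UNIV F2"

end

theory Submission
  imports Defs
begin

lemma deriv_within_cont:
  fixes f :: "real \<Rightarrow> real"
  assumes "\<And>x. x \<in> S \<Longrightarrow> (f has_real_derivative f' x) (at x within S)"
  shows "continuous_on S f"
  using assms by (auto intro!: has_derivative_continuous_on has_field_derivative_imp_has_derivative)

lemma mvt_within:
  fixes f :: "real \<Rightarrow> real"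
  assumes "a < b" "\<And>x. x \<in> {a..b} \<Longrightarrow> (f has_real_derivative f' x) (at x within {a..b})"
  shows "\<exists>x\<in>{a<..<b}. f b - f a = f' x * (b - a)"
proof -
  show ?thesis
    by (rule mvt_simple[OF assms(1), where f'="\<lambda>x h. f' x * h"])
      (use assms(2) in \<open>auto simp: has_field_derivative_def\<close>)
qed

lemma nonpos_deriv_within:
  fixes f :: "real \<Rightarrow> real"
  assumes "a \<le> b" "\<And>x. x \<in> {a..b} \<Longrightarrow> (f has_real_derivative f' x) (at x within {a..b})"
    "\<And>x. x \<in> {a..b} \<Longrightarrow> f' x \<le> 0"
  shows "f b \<le> f a"
proof (cases "a = b")
  case False
  then have "a < b" using assms by auto
  from mvt_within[OF this assms(2)] obtain x where "x\<in>{a<..<b}" "f b - f a = f' x * (b - a)" by blast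
  moreover have "f' x \<le> 0" using assms(3) \<open>x\<in>{a<..<b}\<close> by auto
  ultimately show ?thesis using \<open>a < b\<close> mult_nonpos_nonneg[of "f' x" "b - a"] by simp
qed simp

lemma cross:
  fixes w :: "real \<Rightarrow> real"
  assumes ab: "a \<le> b"
    and der: "\<And>t. t \<in> {a..b} \<Longrightarrow> (w has_real_derivative w' t) (at t within {a..b})"
    and wa: "0 \<le> w a"
    and zer: "\<And>t. t \<in> {a..b} \<Longrightarrow> w t = 0 \<Longrightarrow> 0 < w' t"
    and t1: "t1 \<in> {a<..b}"
  shows "0 < w t1"
proof (rule ccontr)
  assume "\<not> 0 < w t1"
  have cont: "continuous_on {a..b} w" using der by (rule deriv_within_cont)
  obtain s where s: "s \<in> {a<..b}" "w s < 0"
  proof (cases "w t1 < 0")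
    case True then show ?thesis using that t1 by blast
  next
    case False
    then have "w t1 = 0" using \<open>\<not> 0 < w t1\<close> by auto
    then have "0 < w' t1" using zer t1 by auto
    from has_real_derivative_pos_inc_left[OF der[of t1] this] t1
    obtain d where d: "d > 0" "\<And>h. h > 0 \<Longrightarrow> t1 - h \<in> {a..b} \<Longrightarrow> h < d \<Longrightarrow> w (t1 - h) < w t1"
      by auto
    define h where "h = min (d/2) ((t1 - a)/2)"
    have hh: "h > 0" "h \<le> d/2" "h \<le> (t1 - a)/2"
      using d t1 unfolding h_def min_def by auto
    have h: "h > 0" "h < d" "t1 - h \<in> {a..b}" "t1 - h \<in> {a<..b}" using hh d t1 by auto
    show ?thesis using that[of "t1 - h"] d(2)[OF h(1) h(3) h(2)] h \<open>w t1 = 0\<close> by auto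
  qed
  define Z where "Z = {t \<in> {a..s}. w t = 0}"
  have sub: "{a..s} \<subseteq> {a..b}" using s by auto
  have contS: "continuous_on {a..s} w" using continuous_on_subset[OF cont sub] .
  have "closed Z" unfolding Z_def
    using continuous_closed_preimage_constant[OF contS closed_atLeastAtMost] by blast
  moreover have "bounded Z" unfolding Z_def by (rule bounded_subset[OF bounded_closed_interval]) auto
  ultimately have cZ: "compact Z" by (simp add: compact_eq_bounded_closed)
  have "\<exists>x. a \<le> x \<and> x \<le> s \<and> w x = 0"
    using IVT2'[of w s 0 a] s wa contS by auto
  then have "Z \<noteq> {}" unfolding Z_def by auto
  then obtain z where zZ: "z \<in> Z" and zmax: "\<And>y. y \<in> Z \<Longrightarrow> y \<le> z"
    using compact_attains_sup[OF cZ] by blast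
  have z: "z \<in> {a..s}" "w z = 0" using zZ by (auto simp: Z_def)
  then have "z < s" using s by (cases "z = s") auto
  have "0 < w' z" using zer z sub by auto
  from has_real_derivative_pos_inc_right[OF der[of z] this] z sub
  obtain d where d: "d > 0" "\<And>h. h > 0 \<Longrightarrow> z + h \<in> {a..b} \<Longrightarrow> h < d \<Longrightarrow> w z < w (z + h)"
    by auto
  define h where "h = min (d/2) ((s - z)/2)"
  have hh: "h > 0" "h \<le> d/2" "h \<le> (s - z)/2"
    using d \<open>z < s\<close> unfolding h_def min_def by auto
  have h: "h > 0" "h < d" "z + h \<in> {a..b}" "z + h \<le> s" using hh d \<open>z < s\<close> z s by auto
  have pos: "0 < w (z + h)" using d(2)[OF h(1) h(3) h(2)] z by auto
  have "\<exists>x. z + h \<le> x \<and> x \<le> s \<and> w x = 0"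
    using IVT2'[of w s 0 "z+h"] s pos h continuous_on_subset[OF contS, of "{z+h..s}"] z by auto
  then obtain x where "z + h \<le> x" "x \<le> s" "w x = 0" by blast
  then have "x \<in> Z" using z h unfolding Z_def by auto
  then show False using zmax[of x] \<open>z + h \<le> x\<close> h by auto
qed

lemma periodic_no_zero:
  fixes w :: "real \<Rightarrow> real"
  assumes der: "\<And>t. (w has_real_derivative w' t) (at t)"
    and per: "\<And>t. w (t + 1) = w t"
    and zer: "\<And>t. w t = 0 \<Longrightarrow> 0 < w' t"
  shows "w x \<noteq> 0"
proof
  assume "w x = 0"
  have "0 < w (x + 1)"
    by (rule cross[of x "x+1" w w']) (use has_field_derivative_at_within[OF der] \<open>w x = 0\<close> zer in auto)
  then show False using per[of x] \<open>w x = 0\<close> by simp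
qed


definition clamp3 :: "real \<Rightarrow> real" where "clamp3 x = max 0 (min 3 x)"

lemma clamp3_in: "clamp3 x \<in> {0..3}" by (auto simp: clamp3_def)
lemma clamp3_id: "x \<in> {0..3} \<Longrightarrow> clamp3 x = x" by (auto simp: clamp3_def)
lemma clamp3_cont: "continuous_on UNIV clamp3"
  unfolding clamp3_def by (intro continuous_intros)

definition odef :: "(real \<Rightarrow> real \<Rightarrow> real) \<Rightarrow> real \<Rightarrow> real \<Rightarrow> bool" where
  "odef f K L \<longleftrightarrow> continuous_on UNIV (\<lambda>(t,u). f t u) \<and> (\<forall>t u. \<bar>f t u\<bar> \<le> K) \<and> 0 \<le> L \<and>
     (\<forall>t u w. \<bar>f t u - f t w\<bar> \<le> L * \<bar>u - w\<bar>)"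

lemma odef_comp_cont:
  assumes "odef f K L" "continuous_on S v"
  shows "continuous_on S (\<lambda>s. f s (v s))"
proof -
  have c: "continuous_on UNIV (\<lambda>(t,u). f t u)" using assms(1) by (simp add: odef_def)
  have "continuous_on S (\<lambda>s. (\<lambda>(t,u). f t u) (s, v s))"
    by (rule continuous_on_compose2[OF c]) (auto intro!: continuous_intros assms(2))
  then show ?thesis by simp
qed

lemma int_deriv:
  fixes g :: "real \<Rightarrow> real"
  assumes "continuous_on {0..T} g" "t \<in> {0..T}"
  shows "((\<lambda>y. integral {0..y} g) has_real_derivative g t) (at t within {0..T})"
  by (rule integral_has_real_derivative[OF assms])

lemma int_cont:
  fixes g :: "real \<Rightarrow> real"
  assumes "continuous_on {0..T} g"
  shows "continuous_on {0..T} (\<lambda>y. integral {0..y} g)"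
  by (rule deriv_within_cont) (rule int_deriv[OF assms])

definition picard_fun :: "(real \<Rightarrow> real \<Rightarrow> real) \<Rightarrow> real \<Rightarrow> (real \<Rightarrow> real) \<Rightarrow> real \<Rightarrow> real" where
  "picard_fun f v0 u x = v0 + integral {0..clamp3 x} (\<lambda>s. f s (u s))"

lemma picard_bcont:
  assumes "odef f K L" "continuous_on UNIV u"
  shows "picard_fun f v0 u \<in> bcontfun"
proof (rule bcontfun_normI)
  have g: "continuous_on {0..3} (\<lambda>s. f s (u s))"
    using odef_comp_cont[OF assms(1) continuous_on_subset[OF assms(2)]] by auto
  show "continuous_on UNIV (picard_fun f v0 u)"
    unfolding picard_fun_def
    by (intro continuous_intros continuous_on_compose2[OF int_cont[OF g] clamp3_cont])
       (use clamp3_in in auto)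
  fix x
  have K: "\<And>t. \<bar>f t (u t)\<bar> \<le> K" using assms(1) by (simp add: odef_def)
  have "norm (integral {0..clamp3 x} (\<lambda>s. f s (u s))) \<le> K * (clamp3 x - 0)"
    by (rule integral_bound) (use clamp3_in continuous_on_subset[OF g] K in auto)
  moreover have "K * clamp3 x \<le> \<bar>K\<bar> * 3" using clamp3_in[of x]
    by (metis abs_ge_self abs_mult abs_of_nonneg atLeastAtMost_iff dual_order.trans mult_mono' abs_ge_zero)
  ultimately show "norm (picard_fun f v0 u x) \<le> \<bar>v0\<bar> + \<bar>K\<bar> * 3"
    unfolding picard_fun_def by auto
qed

definition picard :: "(real \<Rightarrow> real \<Rightarrow> real) \<Rightarrow> real \<Rightarrow> (real \<Rightarrow>\<^sub>C real) \<Rightarrow> (real \<Rightarrow>\<^sub>C real)" where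
  "picard f v0 u = Bcontfun (picard_fun f v0 (apply_bcontfun u))"

lemma picard_apply:
  assumes "odef f K L"
  shows "apply_bcontfun (picard f v0 u) = picard_fun f v0 (apply_bcontfun u)"
  unfolding picard_def by (rule Bcontfun_inverse[OF picard_bcont[OF assms]]) simp

lemma poly_integral:
  fixes y L D :: real
  assumes "y \<in> {0..3}" "0 \<le> L"
  shows "integral {0..y} (\<lambda>s. L * ((L * s)^k / fact k * D)) = (L * y)^Suc k / fact (Suc k) * D"
proof -
  define C where "C = L^Suc k * D / fact (Suc k)"
  define F :: "real \<Rightarrow> real" where "F = (\<lambda>s. C * s^Suc k)"
  have d: "(F has_vector_derivative L * ((L * x)^k / fact k * D)) (at x within {0..y})" for x
  proof -
    have "(F has_real_derivative C * (real (Suc k) * x ^ (Suc k - Suc 0))) (at x within {0..y})"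
      unfolding F_def by (rule DERIV_cmult) (rule has_field_derivative_at_within[OF DERIV_pow])
    moreover have "C * (real (Suc k) * x ^ (Suc k - Suc 0)) = L * ((L * x)^k / fact k * D)"
    proof -
      have fs: "(fact (Suc k) :: real) = real (Suc k) * fact k" by (simp add: fact_Suc)
      have "C * (real (Suc k) * x ^ (Suc k - Suc 0)) = L^Suc k * D * x^k / fact k"
        unfolding C_def fs by simp
      also have "\<dots> = L * ((L * x)^k / fact k * D)" by (simp add: power_mult_distrib)
      finally show ?thesis .
    qed
    ultimately show ?thesis
      by (simp add: has_real_derivative_iff_has_vector_derivative)
  qed
  have hi: "((\<lambda>s. L * ((L * s)^k / fact k * D)) has_integral (F y - F 0)) {0..y}"
    by (rule fundamental_theorem_of_calculus) (use assms d in auto)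
  have Feq: "F y - F 0 = (L * y)^Suc k / fact (Suc k) * D"
    unfolding F_def C_def by (simp add: power_mult_distrib)
  have "integral {0..y} (\<lambda>s. L * ((L * s)^k / fact k * D)) = F y - F 0"
    by (rule integral_unique[OF hi])
  then show ?thesis using Feq by (simp only:)
qed

lemma picard_iter:
  assumes f: "odef f K L"
  shows "\<bar>apply_bcontfun ((picard f v0 ^^ k) u) x - apply_bcontfun ((picard f v0 ^^ k) w) x\<bar>
           \<le> (L * clamp3 x)^k / fact k * dist u w"
proof (induction k arbitrary: x)
  case 0
  then show ?case using dist_bounded[of u x w] by (simp add: dist_real_def)
next
  case (Suc k)
  define A where "A = apply_bcontfun ((picard f v0 ^^ k) u)"
  define B where "B = apply_bcontfun ((picard f v0 ^^ k) w)"
  define y where "y = clamp3 x"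
  have y: "y \<in> {0..3}" using clamp3_in y_def by auto
  have L: "0 \<le> L" and lip: "\<And>t u w. \<bar>f t u - f t w\<bar> \<le> L * \<bar>u - w\<bar>" using f by (auto simp: odef_def)
  have cA: "continuous_on {0..y} (\<lambda>s. f s (A s))" unfolding A_def
    by (rule odef_comp_cont[OF f]) simp
  have cB: "continuous_on {0..y} (\<lambda>s. f s (B s))" unfolding B_def
    by (rule odef_comp_cont[OF f]) simp
  have "apply_bcontfun ((picard f v0 ^^ Suc k) u) x - apply_bcontfun ((picard f v0 ^^ Suc k) w) x
      = integral {0..y} (\<lambda>s. f s (A s)) - integral {0..y} (\<lambda>s. f s (B s))"
    by (simp add: picard_apply[OF f] picard_fun_def A_def B_def y_def)
  also have "\<dots> = integral {0..y} (\<lambda>s. f s (A s) - f s (B s))"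
    by (rule integral_diff[symmetric]) (use cA cB integrable_continuous_real in auto)
  finally have eq: "apply_bcontfun ((picard f v0 ^^ Suc k) u) x - apply_bcontfun ((picard f v0 ^^ Suc k) w) x
      = integral {0..y} (\<lambda>s. f s (A s) - f s (B s))" .
  have "norm (integral {0..y} (\<lambda>s. f s (A s) - f s (B s)))
       \<le> integral {0..y} (\<lambda>s. L * ((L * s)^k / fact k * dist u w))"
  proof (rule integral_norm_bound_integral)
    show "(\<lambda>s. f s (A s) - f s (B s)) integrable_on {0..y}"
      by (rule integrable_continuous_real) (intro continuous_intros cA cB)
    show "(\<lambda>s. L * ((L * s) ^ k / fact k * dist u w)) integrable_on {0..y}"
      by (rule integrable_continuous_real) (auto intro!: continuous_intros)
    fix s assume s: "s \<in> {0..y}"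
    then have cs: "clamp3 s = s" using y by (intro clamp3_id) auto
    have "\<bar>f s (A s) - f s (B s)\<bar> \<le> L * \<bar>A s - B s\<bar>" by (rule lip)
    also have "\<dots> \<le> L * ((L * s)^k / fact k * dist u w)"
      using Suc.IH[of s] L unfolding A_def B_def cs by (intro mult_left_mono) auto
    finally show "norm (f s (A s) - f s (B s)) \<le> L * ((L * s) ^ k / fact k * dist u w)" by simp
  qed
  also have "\<dots> = (L * y)^Suc k / fact (Suc k) * dist u w"
    by (rule poly_integral[OF y L])
  finally show ?case using eq y_def by simp
qed

lemma exists_small_k: "\<exists>k. (x::real)^k / fact k < 1/2"
proof -
  have "summable (\<lambda>n. inverse (fact n) * x^n)" by (rule summable_exp)
  then have "(\<lambda>n. inverse (fact n) * x^n) \<longlonglongrightarrow> 0" by (rule summable_LIMSEQ_zero)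
  then have "\<forall>\<^sub>F n in sequentially. inverse (fact n) * x^n < 1/2"
    by (rule order_tendstoD) simp
  then obtain N where N: "\<forall>n\<ge>N. inverse (fact n) * x^n < 1/2" by (auto simp: eventually_sequentially)
  have "x^N / fact N = inverse (fact N) * x^N" by (simp add: divide_inverse)
  then show ?thesis using N by (intro exI[of _ N]) simp
qed

lemma ode_exists:
  assumes f: "odef f K L"
  shows "\<exists>v. continuous_on UNIV v \<and> (\<forall>t\<in>{0..3}. v t = v0 + integral {0..t} (\<lambda>s. f s (v s)))"
proof -
  have L: "0 \<le> L" using f by (simp add: odef_def)
  obtain k where k: "(3 * L)^k / fact k < 1/2" using exists_small_k by blast
  define Pk where "Pk = picard f v0 ^^ k"
  have contr: "\<forall>u w. dist (Pk u) (Pk w) \<le> (1/2) * dist u w"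
  proof (intro allI)
    fix u w
    show "dist (Pk u) (Pk w) \<le> (1/2) * dist u w"
    proof (rule dist_bound)
      fix x
      have "\<bar>apply_bcontfun (Pk u) x - apply_bcontfun (Pk w) x\<bar> \<le> (L * clamp3 x)^k / fact k * dist u w"
        unfolding Pk_def by (rule picard_iter[OF f])
      also have "\<dots> \<le> (3 * L)^k / fact k * dist u w"
      proof -
        have "L * clamp3 x \<le> L * 3" using clamp3_in[of x] L by (intro mult_left_mono) auto
        then show ?thesis using clamp3_in[of x] L
          by (intro mult_right_mono divide_right_mono power_mono) (auto simp: mult.commute)
      qed
      also have "\<dots> \<le> (1/2) * dist u w" using k by (intro mult_right_mono) auto
      finally show "dist (apply_bcontfun (Pk u) x) (apply_bcontfun (Pk w) x) \<le> 1 / 2 * dist u w"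
        by (simp add: dist_real_def)
    qed
  qed
  have "\<exists>!x. Pk x = x" by (rule banach_fix_type[of "1/2"]) (use contr in simp_all)
  then obtain u where u: "Pk u = u" and uniq: "\<And>y. Pk y = y \<Longrightarrow> y = u"
    by (elim ex1E) blast
  have "Pk (picard f v0 u) = picard f v0 (Pk u)" unfolding Pk_def by (rule funpow_swap1[symmetric])
  then have "Pk (picard f v0 u) = picard f v0 u" using u by simp
  then have fixu: "picard f v0 u = u" by (rule uniq)
  show ?thesis
  proof (intro exI conjI ballI)
    show "continuous_on UNIV (apply_bcontfun u)" by simp
    fix t :: real assume t: "t \<in> {0..3}"
    have "apply_bcontfun u t = apply_bcontfun (picard f v0 u) t" using fixu by simp
    also have "\<dots> = v0 + integral {0..t} (\<lambda>s. f s (apply_bcontfun u s))"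
      by (simp add: picard_apply[OF f] picard_fun_def clamp3_id[OF t])
    finally show "apply_bcontfun u t = v0 + integral {0..t} (\<lambda>s. f s (apply_bcontfun u s))" .
  qed
qed


lemma gronwall:
  fixes \<phi> :: "real \<Rightarrow> real"
  assumes cont: "continuous_on {0..T} \<phi>" and L: "0 \<le> L"
    and le: "\<And>t. t \<in> {0..T} \<Longrightarrow> \<phi> t \<le> \<delta> + L * integral {0..t} \<phi>"
    and t: "t \<in> {0..T}"
  shows "\<phi> t \<le> \<delta> * exp (L * t)"
proof -
  define I where "I = (\<lambda>y. integral {0..y} \<phi>)"
  define \<psi> where "\<psi> = (\<lambda>y. exp (-(L*y)) * (\<delta> + L * I y))"
  have dI: "(I has_real_derivative \<phi> y) (at y within {0..t})" if y: "y \<in> {0..t}" for y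
  proof -
    have "(I has_real_derivative \<phi> y) (at y within {0..T})" unfolding I_def
      by (rule int_deriv[OF cont]) (use y t in auto)
    then show ?thesis by (rule DERIV_subset) (use t in auto)
  qed
  have d\<psi>: "(\<psi> has_real_derivative (exp (-(L*y)) * L * (\<phi> y - (\<delta> + L * I y)))) (at y within {0..t})"
    if y: "y \<in> {0..t}" for y
  proof -
    have "(\<psi> has_real_derivative (exp (-(L*y)) * (-L) * (\<delta> + L * I y) + exp (-(L*y)) * (L * \<phi> y)))
           (at y within {0..t})"
      unfolding \<psi>_def
      by (rule DERIV_mult' DERIV_chain2[OF DERIV_exp] DERIV_add DERIV_const DERIV_cmult dI[OF y]
            derivative_eq_intros | simp)+
    moreover have "exp (-(L*y)) * (-L) * (\<delta> + L * I y) + exp (-(L*y)) * (L * \<phi> y)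
        = exp (-(L*y)) * L * (\<phi> y - (\<delta> + L * I y))" by (simp add: algebra_simps)
    ultimately show ?thesis by simp
  qed
  have "\<psi> t \<le> \<psi> 0"
  proof (rule nonpos_deriv_within[OF _ d\<psi>])
    show "0 \<le> t" using t by auto
    fix y assume y: "y \<in> {0..t}"
    have "\<phi> y \<le> \<delta> + L * I y" unfolding I_def using le[of y] y t by auto
    then show "exp (-(L*y)) * L * (\<phi> y - (\<delta> + L * I y)) \<le> 0"
      using L by (intro mult_nonneg_nonpos) auto
  qed
  then have "exp (-(L*t)) * (\<delta> + L * I t) \<le> \<delta>" by (simp add: \<psi>_def I_def)
  then have "exp (L*t) * (exp (-(L*t)) * (\<delta> + L * I t)) \<le> exp (L*t) * \<delta>"
    by (intro mult_left_mono) auto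
  moreover have "exp (L*t) * (exp (-(L*t)) * (\<delta> + L * I t)) = \<delta> + L * I t"
    by (simp add: mult.assoc[symmetric] exp_minus_inverse)
  ultimately have "\<delta> + L * I t \<le> \<delta> * exp (L * t)"
    by (simp add: mult.commute)
  then show ?thesis using le[OF t] unfolding I_def by linarith
qed

lemma sol_deriv:
  assumes f: "odef f K L" and vc: "continuous_on {0..3} v"
    and vs: "\<forall>t\<in>{0..3}. v t = v0 + integral {0..t} (\<lambda>s. f s (v s))"
    and t: "t \<in> {0..3}"
  shows "(v has_real_derivative f t (v t)) (at t within {0..3})"
proof -
  have gc: "continuous_on {0..3} (\<lambda>s. f s (v s))" by (rule odef_comp_cont[OF f vc])
  have "((\<lambda>y. v0 + integral {0..y} (\<lambda>s. f s (v s))) has_real_derivative 0 + f t (v t)) (at t within {0..3})"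
    by (rule DERIV_add[OF DERIV_const int_deriv[OF gc t]])
  then have dd: "((\<lambda>y. v0 + integral {0..y} (\<lambda>s. f s (v s))) has_derivative ((*) (f t (v t)))) (at t within {0..3})"
    by (simp add: has_field_derivative_def)
  have eqv: "\<And>y. y \<in> {0..3} \<Longrightarrow> v y = v0 + integral {0..y} (\<lambda>s. f s (v s))"
    using vs by auto
  have "(v has_derivative ((*) (f t (v t)))) (at t within {0..3})"
    by (rule has_derivative_transform[OF t eqv dd])
  then show ?thesis by (simp add: has_field_derivative_def)
qed

lemma sol_bound:
  assumes f: "odef f K L" and vc: "continuous_on {0..3} v"
    and vs: "\<forall>t\<in>{0..3}. v t = v0 + integral {0..t} (\<lambda>s. f s (v s))"
    and t: "t \<in> {0..3}"
  shows "\<bar>v t - v0\<bar> \<le> K * t"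
proof -
  have gc: "continuous_on {0..3} (\<lambda>s. f s (v s))" by (rule odef_comp_cont[OF f vc])
  have K: "\<And>t u. \<bar>f t u\<bar> \<le> K" using f by (simp add: odef_def)
  have "norm (integral {0..t} (\<lambda>s. f s (v s))) \<le> K * (t - 0)"
    by (rule integral_bound) (use t continuous_on_subset[OF gc] K in auto)
  then show ?thesis using vs t by auto
qed

lemma ode_dep:
  assumes f1: "odef f1 K1 L" and f2: "odef f2 K2 L2"
    and v1c: "continuous_on {0..3} v1" and v1s: "\<forall>t\<in>{0..3}. v1 t = a + integral {0..t} (\<lambda>s. f1 s (v1 s))"
    and v2c: "continuous_on {0..3} v2" and v2s: "\<forall>t\<in>{0..3}. v2 t = b + integral {0..t} (\<lambda>s. f2 s (v2 s))"
    and eta: "\<And>t u. \<bar>f1 t u - f2 t u\<bar> \<le> \<eta>"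
    and t: "t \<in> {0..3}"
  shows "\<bar>v1 t - v2 t\<bar> \<le> (\<bar>a - b\<bar> + 3 * \<eta>) * exp (3 * L)"
proof -
  have L: "0 \<le> L" and lip: "\<And>t u w. \<bar>f1 t u - f1 t w\<bar> \<le> L * \<bar>u - w\<bar>" using f1 by (auto simp: odef_def)
  have eta0: "0 \<le> \<eta>" using eta[of 0 0] by linarith
  define \<phi> where "\<phi> = (\<lambda>s. \<bar>v1 s - v2 s\<bar>)"
  have \<phi>c: "continuous_on {0..3} \<phi>" unfolding \<phi>_def by (intro continuous_intros v1c v2c)
  have g1: "continuous_on {0..3} (\<lambda>s. f1 s (v1 s))" by (rule odef_comp_cont[OF f1 v1c])
  have g2: "continuous_on {0..3} (\<lambda>s. f2 s (v2 s))" by (rule odef_comp_cont[OF f2 v2c])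
  have step: "\<phi> s \<le> (\<bar>a - b\<bar> + 3 * \<eta>) + L * integral {0..s} \<phi>" if s: "s \<in> {0..3}" for s
  proof -
    have sub: "{0..s} \<subseteq> {0..3}" using s by auto
    have i1: "(\<lambda>r. f1 r (v1 r)) integrable_on {0..s}"
      by (rule integrable_continuous_real) (rule continuous_on_subset[OF g1 sub])
    have i2: "(\<lambda>r. f2 r (v2 r)) integrable_on {0..s}"
      by (rule integrable_continuous_real) (rule continuous_on_subset[OF g2 sub])
    have i\<phi>: "\<phi> integrable_on {0..s}"
      by (rule integrable_continuous_real) (rule continuous_on_subset[OF \<phi>c sub])
    have iL: "(\<lambda>r. L * \<phi> r) integrable_on {0..s}"
      by (rule integrable_continuous_real) (intro continuous_intros continuous_on_subset[OF \<phi>c sub])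
    have "v1 s - v2 s = (a - b) + (integral {0..s} (\<lambda>r. f1 r (v1 r)) - integral {0..s} (\<lambda>r. f2 r (v2 r)))"
      using v1s v2s s by auto
    also have "integral {0..s} (\<lambda>r. f1 r (v1 r)) - integral {0..s} (\<lambda>r. f2 r (v2 r))
        = integral {0..s} (\<lambda>r. f1 r (v1 r) - f2 r (v2 r))"
      by (rule integral_diff[OF i1 i2, symmetric])
    finally have eq: "v1 s - v2 s = (a - b) + integral {0..s} (\<lambda>r. f1 r (v1 r) - f2 r (v2 r))" .
    have "norm (integral {0..s} (\<lambda>r. f1 r (v1 r) - f2 r (v2 r))) \<le> integral {0..s} (\<lambda>r. L * \<phi> r + \<eta>)"
    proof (rule integral_norm_bound_integral)
      show "(\<lambda>r. f1 r (v1 r) - f2 r (v2 r)) integrable_on {0..s}" using integrable_diff[OF i1 i2] .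
      show "(\<lambda>r. L * \<phi> r + \<eta>) integrable_on {0..s}"
        by (intro integrable_add iL integrable_const_ivl)
      fix r
      have "\<bar>f1 r (v1 r) - f2 r (v2 r)\<bar> \<le> \<bar>f1 r (v1 r) - f1 r (v2 r)\<bar> + \<bar>f1 r (v2 r) - f2 r (v2 r)\<bar>"
        by linarith
      also have "\<dots> \<le> L * \<phi> r + \<eta>" unfolding \<phi>_def using lip[of r "v1 r" "v2 r"] eta[of r "v2 r"] by linarith
      finally show "norm (f1 r (v1 r) - f2 r (v2 r)) \<le> L * \<phi> r + \<eta>" by simp
    qed
    also have "integral {0..s} (\<lambda>r. L * \<phi> r + \<eta>) = L * integral {0..s} \<phi> + s * \<eta>"
      using s by (simp add: integral_add iL integrable_const_ivl)
    also have "\<dots> \<le> L * integral {0..s} \<phi> + 3 * \<eta>" using s eta0 by (intro add_left_mono mult_right_mono) auto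
    finally have "\<bar>integral {0..s} (\<lambda>r. f1 r (v1 r) - f2 r (v2 r))\<bar> \<le> L * integral {0..s} \<phi> + 3 * \<eta>" by simp
    then show ?thesis unfolding \<phi>_def using eq by simp
  qed
  have "\<phi> t \<le> (\<bar>a - b\<bar> + 3 * \<eta>) * exp (L * t)"
    by (rule gronwall[OF \<phi>c L step t])
  also have "\<dots> \<le> (\<bar>a - b\<bar> + 3 * \<eta>) * exp (3 * L)"
    using t L eta0 by (intro mult_left_mono) (auto simp: mult.commute intro!: mult_left_mono)
  finally show ?thesis unfolding \<phi>_def .
qed


lemma nonpos_deriv_open:
  fixes f :: "real \<Rightarrow> real"
  assumes "a \<le> b" "continuous_on {a..b} f"
    "\<And>x. x \<in> {a<..<b} \<Longrightarrow> (f has_real_derivative f' x) (at x)"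
    "\<And>x. x \<in> {a<..<b} \<Longrightarrow> f' x \<le> 0"
  shows "f b \<le> f a"
proof (cases "a = b")
  case False
  then have ab: "a < b" using assms by auto
  obtain x where x: "a < x" "x < b" "f b - f a = (\<lambda>h. f' x * h) (b - a)"
    by (rule mvt[OF ab assms(2), where f'="\<lambda>x h. f' x * h"])
       (use assms(3) in \<open>auto simp: has_field_derivative_def\<close>)
  have "f' x \<le> 0" using assms(4) x by auto
  then show ?thesis using x ab mult_nonpos_nonneg[of "f' x" "b - a"] by simp
qed simp

lemma uniq_ode:
  fixes v w :: "real \<Rightarrow> real"
  assumes T: "0 \<le> T" and vc: "continuous_on {0..T} v" and wc: "continuous_on {0..T} w"
    and dv: "\<And>t. t \<in> {0<..<T} \<Longrightarrow> (v has_real_derivative f t (v t)) (at t)"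
    and dw: "\<And>t. t \<in> {0<..<T} \<Longrightarrow> (w has_real_derivative f t (w t)) (at t)"
    and lip: "\<And>t u w. \<bar>f t u - f t w\<bar> \<le> L * \<bar>u - w\<bar>" and L: "0 \<le> L"
    and init: "v 0 = w 0" and t: "t \<in> {0..T}"
  shows "v t = w t"
proof -
  define \<psi> where "\<psi> = (\<lambda>s. exp (-(2 * L * s)) * (v s - w s)^2)"
  have "\<psi> t \<le> \<psi> 0"
  proof (rule nonpos_deriv_open[where f=\<psi> and a=0 and b=t])
    show "0 \<le> t" using t by auto
    show "continuous_on {0..t} \<psi>" unfolding \<psi>_def using t
      by (intro continuous_intros continuous_on_subset[OF vc] continuous_on_subset[OF wc]) auto
    fix s assume s: "s \<in> {0<..<t}"
    then have s': "s \<in> {0<..<T}" using t by auto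
    show "(\<psi> has_real_derivative
        (exp (-(2 * L * s)) * (-(2 * L)) * (v s - w s)^2 + exp (-(2 * L * s)) * (2 * (v s - w s) * (f s (v s) - f s (w s))))) (at s)"
      unfolding \<psi>_def
      by (auto intro!: derivative_eq_intros dv[OF s'] dw[OF s'] simp: power2_eq_square algebra_simps)
    have "(v s - w s) * (f s (v s) - f s (w s)) \<le> \<bar>v s - w s\<bar> * \<bar>f s (v s) - f s (w s)\<bar>"
      by (metis abs_ge_self abs_mult)
    also have "\<dots> \<le> \<bar>v s - w s\<bar> * (L * \<bar>v s - w s\<bar>)" by (intro mult_left_mono lip) auto
    also have "\<dots> = L * (v s - w s)^2" by (simp add: power2_eq_square abs_mult_self_eq algebra_simps)
    finally have "(v s - w s) * (f s (v s) - f s (w s)) \<le> L * (v s - w s)^2" .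
    then have "(-(2 * L)) * (v s - w s)^2 + 2 * (v s - w s) * (f s (v s) - f s (w s)) \<le> 0" by linarith
    then have "exp (-(2 * L * s)) * ((-(2 * L)) * (v s - w s)^2 + 2 * (v s - w s) * (f s (v s) - f s (w s))) \<le> 0"
      by (intro mult_nonneg_nonpos) auto
    then show "exp (-(2 * L * s)) * (-(2 * L)) * (v s - w s)^2 + exp (-(2 * L * s)) * (2 * (v s - w s) * (f s (v s) - f s (w s))) \<le> 0"
      by (simp add: algebra_simps)
  qed
  then have "exp (-(2 * L * t)) * (v t - w t)^2 \<le> 0" using init by (simp add: \<psi>_def)
  moreover have "0 < exp (-(2 * L * t))" by simp
  ultimately have "(v t - w t)^2 \<le> 0" by (simp add: mult_le_0_iff)
  then show ?thesis by simp
qed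

lemma patch_deriv:
  fixes g g' :: "real \<Rightarrow> real"
  assumes dg: "\<And>t. t \<in> {0<..<3} \<Longrightarrow> (g has_real_derivative g' t) (at t)"
    and pg: "\<And>t. t \<in> {0..2} \<Longrightarrow> g (t + 1) = g t"
    and pg': "\<And>t. t \<in> {0..2} \<Longrightarrow> g' (t + 1) = g' t"
  shows "((\<lambda>x. g (frac x + 1)) has_real_derivative g' (frac x + 1)) (at x)"
proof -
  define n where "n = \<lfloor>x\<rfloor>"
  have fx: "frac x = x - n" by (simp add: frac_def n_def)
  have fr: "frac x \<in> {0..<1}" using frac_lt_1[of x] frac_ge_0[of x] by auto
  have e: "x + (1 - real_of_int n) = frac x + 1" using fx by simp
  have "(g has_real_derivative g' (frac x + 1)) (at (frac x + 1))"
  proof (rule dg)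
    have "0 < frac x + 1" using frac_ge_0[of x] by linarith
    moreover have "frac x + 1 < 3" using frac_lt_1[of x] by linarith
    ultimately show "frac x + 1 \<in> {0<..<3}" by simp
  qed
  then have "(g has_real_derivative g' (frac x + 1)) (at (x + (1 - real_of_int n)))"
    by (simp only: e)
  then have d1: "((\<lambda>z. g (z + (1 - real_of_int n))) has_real_derivative g' (frac x + 1)) (at x)"
    by (rule DERIV_shift[THEN iffD1])
  show ?thesis
  proof (rule has_field_derivative_transform_within_open[OF d1, of "{real_of_int n - 1 <..< real_of_int n + 2}"])
    show "open {real_of_int n - 1<..<real_of_int n + 2}" by simp
    show "x \<in> {real_of_int n - 1<..<real_of_int n + 2}" using fx fr by auto
    fix z assume z: "z \<in> {real_of_int n - 1<..<real_of_int n + 2}"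
    define s where "s = z - n"
    have s: "-1 < s" "s < 2" using z by (auto simp: s_def)
    show "g (z + (1 - real_of_int n)) = g (frac z + 1)"
    proof (cases "s < 0")
      case True
      have "\<lfloor>z\<rfloor> = n - 1" by (rule floor_unique) (use True s in \<open>auto simp: s_def\<close>)
      then have "frac z = s + 1" by (simp add: frac_def s_def)
      then have B: "frac z + 1 = (s + 1) + 1" by simp
      have A: "z + (1 - real_of_int n) = s + 1" by (simp add: s_def)
      show ?thesis unfolding A B using pg[of "s + 1"] True s by simp
    next
      case False
      show ?thesis
      proof (cases "s < 1")
        case True
        have "\<lfloor>z\<rfloor> = n" by (rule floor_unique) (use True False in \<open>auto simp: s_def\<close>)
        then have "frac z = s" by (simp add: frac_def s_def)
        then have B: "frac z + 1 = s + 1" by simp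
        have A: "z + (1 - real_of_int n) = s + 1" by (simp add: s_def)
        show ?thesis unfolding A B ..
      next
        case False2: False
        have "\<lfloor>z\<rfloor> = n + 1" by (rule floor_unique) (use False2 s in \<open>auto simp: s_def\<close>)
        then have "frac z = s - 1" by (simp add: frac_def s_def)
        then have B: "frac z + 1 = s" by simp
        have A: "z + (1 - real_of_int n) = s + 1" by (simp add: s_def)
        show ?thesis unfolding A B using pg[of s] False2 s by simp
      qed
    qed
  qed
qed


locale gsys =
  fixes G :: "real \<Rightarrow> real \<Rightarrow> real" and K L :: real
  assumes Gc: "continuous_on UNIV (\<lambda>(p,x). G p x)"
    and Gb: "\<And>p x. \<bar>G p x\<bar> \<le> K"
    and L0: "0 \<le> L"
    and Gl: "\<And>p q x. \<bar>G p x - G q x\<bar> \<le> L * \<bar>p - q\<bar>"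
    and Gp: "\<And>p x. G p (x + 1) = G p x"
begin

lemma K0: "0 \<le> K" using Gb[of 0 0] by linarith

lemma G_comp_cont:
  assumes "continuous_on S v" "continuous_on S w"
  shows "continuous_on S (\<lambda>s. G (v s) (w s))"
proof -
  have "continuous_on S (\<lambda>s. (\<lambda>(p,x). G p x) (v s, w s))"
    by (rule continuous_on_compose2[OF Gc]) (auto intro!: continuous_intros assms)
  then show ?thesis by simp
qed

lemma G_int: "G p (x + of_int k) = G p x"
proof (induction k rule: int_induct[where k=0])
  case base then show ?case by simp
next
  case (step1 i)
  have "G p (x + of_int (i + 1)) = G p ((x + of_int i) + 1)" by (simp add: algebra_simps)
  then show ?case using Gp step1 by simp
next
  case (step2 i)
  have e: "(x + of_int (i - 1)) + 1 = x + of_int i" by simp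
  have "G p (x + of_int (i - 1)) = G p ((x + of_int (i - 1)) + 1)" by (rule Gp[symmetric])
  also have "\<dots> = G p (x + of_int i)" by (simp only: e)
  finally show ?case using step2 by simp
qed

lemma G_frac: "G p (frac x + 1) = G p x"
proof -
  have e: "frac x + 1 = x + of_int (1 - \<lfloor>x\<rfloor>)" by (simp add: frac_def)
  have "G p (frac x + 1) = G p (x + of_int (1 - \<lfloor>x\<rfloor>))" by (simp only: e)
  then show ?thesis by (simp only: G_int)
qed

definition fc :: "real \<Rightarrow> real \<Rightarrow> real \<Rightarrow> real" where "fc c t u = c - G u t"

lemma odef_fc: "odef (fc c) (\<bar>c\<bar> + K) L"
  unfolding odef_def
proof (intro conjI allI)
  have "continuous_on UNIV (\<lambda>z::real\<times>real. c - G (snd z) (fst z))"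
    by (intro continuous_intros G_comp_cont continuous_on_snd continuous_on_fst continuous_on_id)
  moreover have "(\<lambda>(t,u). fc c t u) = (\<lambda>z::real\<times>real. c - G (snd z) (fst z))"
    by (auto simp: fc_def)
  ultimately show "continuous_on UNIV (\<lambda>(t,u). fc c t u)" by simp
  fix t u
  show "\<bar>fc c t u\<bar> \<le> \<bar>c\<bar> + K" using Gb[of u t] abs_triangle_ineq4[of c "G u t"] by (simp add: fc_def)
next
  show "0 \<le> L" by (rule L0)
next
  fix t u w
  show "\<bar>fc c t u - fc c t w\<bar> \<le> L * \<bar>u - w\<bar>"
    using Gl[of w t u] by (simp add: fc_def abs_minus_commute)
qed

definition issol :: "real \<Rightarrow> real \<Rightarrow> (real \<Rightarrow> real) \<Rightarrow> bool" where
  "issol c v0 v \<longleftrightarrow> continuous_on UNIV v \<and> (\<forall>t\<in>{0..3}. v t = v0 + integral {0..t} (\<lambda>s. fc c s (v s)))"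

definition sol :: "real \<Rightarrow> real \<Rightarrow> real \<Rightarrow> real" where "sol c v0 = (SOME v. issol c v0 v)"

lemma sol_issol: "issol c v0 (sol c v0)"
proof -
  have "\<exists>v. issol c v0 v" using ode_exists[OF odef_fc] by (simp add: issol_def)
  then show ?thesis unfolding sol_def by (rule someI_ex)
qed

lemma sol_cont: "continuous_on S (sol c v0)"
  using sol_issol[of c v0] by (auto simp: issol_def intro: continuous_on_subset)

lemma sol_eq: "\<forall>t\<in>{0..3}. sol c v0 t = v0 + integral {0..t} (\<lambda>s. fc c s (sol c v0 s))"
  using sol_issol[of c v0] by (auto simp: issol_def)

lemma sol0: "sol c v0 0 = v0" using sol_eq[of c v0] by simp

lemma sol_der: "t \<in> {0..3} \<Longrightarrow> (sol c v0 has_real_derivative c - G (sol c v0 t) t) (at t within {0..3})"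
  using sol_deriv[OF odef_fc sol_cont sol_eq] by (simp add: fc_def)

lemma sol_der_at: "t \<in> {0<..<3} \<Longrightarrow> (sol c v0 has_real_derivative c - G (sol c v0 t) t) (at t)"
  using sol_der[of t c v0] by (simp add: at_within_Icc_at)

lemma sol_dep: "t \<in> {0..3} \<Longrightarrow> \<bar>sol c v0 t - sol c' v0' t\<bar> \<le> (\<bar>v0 - v0'\<bar> + 3 * \<bar>c - c'\<bar>) * exp (3 * L)"
  by (rule ode_dep[OF odef_fc odef_fc sol_cont sol_eq sol_cont sol_eq]) (auto simp: fc_def)

lemma sol_bnd: "t \<in> {0..3} \<Longrightarrow> \<bar>sol c v0 t - v0\<bar> \<le> (\<bar>c\<bar> + K) * t"
  by (rule sol_bound[OF odef_fc sol_cont sol_eq])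

lemma sol_strict:
  assumes c: "c1 < c2" and t: "t \<in> {0<..3}"
  shows "sol c1 v0 t < sol c2 v0 t"
proof -
  define w where "w = (\<lambda>s. sol c2 v0 s - sol c1 v0 s)"
  define w' where "w' = (\<lambda>s. (c2 - G (sol c2 v0 s) s) - (c1 - G (sol c1 v0 s) s))"
  have "0 < w t"
  proof (rule cross[of 0 3 w w'])
    fix s :: real assume "s \<in> {0..3}"
    then show "(w has_real_derivative w' s) (at s within {0..3})"
      unfolding w_def w'_def by (intro DERIV_diff sol_der)
  next
    fix s :: real assume "s \<in> {0..3}" "w s = 0"
    then show "0 < w' s" using c by (simp add: w_def w'_def)
  qed (use t in \<open>auto simp: w_def sol0\<close>)
  then show ?thesis by (simp add: w_def)
qed

lemma sol_le: "c1 \<le> c2 \<Longrightarrow> t \<in> {0..3} \<Longrightarrow> sol c1 v0 t \<le> sol c2 v0 t"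
  using sol_strict[of c1 c2 t v0] by (cases "c1 = c2"; cases "t = 0") (auto simp: sol0)

lemma sol_1_lip: "\<bar>sol c v0 1 - sol c' v0' 1\<bar> \<le> (\<bar>v0 - v0'\<bar> + 3 * \<bar>c - c'\<bar>) * exp (3 * L)"
  by (rule sol_dep) auto

lemma P_hi: assumes "K + 1 \<le> c" shows "v0 < sol c v0 1"
proof -
  have "\<exists>x\<in>{0<..<1}. sol c v0 1 - sol c v0 0 = (c - G (sol c v0 x) x) * (1 - 0)"
    by (rule mvt_within) (auto intro: DERIV_subset[OF sol_der])
  then obtain x where "sol c v0 1 - sol c v0 0 = c - G (sol c v0 x) x" by auto
  moreover have "G (sol c v0 x) x \<le> K" using Gb[of "sol c v0 x" x] by linarith
  ultimately show ?thesis using assms sol0[of c v0] by linarith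
qed

lemma P_lo: assumes "c \<le> - K - 1" shows "sol c v0 1 < v0"
proof -
  have "\<exists>x\<in>{0<..<1}. sol c v0 1 - sol c v0 0 = (c - G (sol c v0 x) x) * (1 - 0)"
    by (rule mvt_within) (auto intro: DERIV_subset[OF sol_der])
  then obtain x where "sol c v0 1 - sol c v0 0 = c - G (sol c v0 x) x" by auto
  moreover have "- K \<le> G (sol c v0 x) x" using Gb[of "sol c v0 x" x] by linarith
  ultimately show ?thesis using assms sol0[of c v0] by linarith
qed

lemma ex_c: "\<exists>c\<in>{-K-1..K+1}. sol c v0 1 = v0"
proof -
  have cont: "continuous_on {-K-1..K+1} (\<lambda>c. sol c v0 1)"
  proof (rule lipschitz_on_continuous_on)
    show "(3 * exp (3 * L))-lipschitz_on {-K-1..K+1} (\<lambda>c. sol c v0 1)"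
    proof (rule lipschitz_onI)
      fix x y :: real
      show "dist (sol x v0 1) (sol y v0 1) \<le> 3 * exp (3 * L) * dist x y"
        using sol_1_lip[of x v0 y v0] by (simp add: dist_real_def algebra_simps)
    qed simp
  qed
  have "\<exists>c. -K-1 \<le> c \<and> c \<le> K+1 \<and> sol c v0 1 = v0"
    by (rule IVT') (use P_hi[of "K+1" v0] P_lo[of "-K-1" v0] K0 cont in auto)
  then show ?thesis by auto
qed

definition cf :: "real \<Rightarrow> real" where "cf v0 = (SOME c. c \<in> {-K-1..K+1} \<and> sol c v0 1 = v0)"

lemma cf: "cf v0 \<in> {-K-1..K+1}" "sol (cf v0) v0 1 = v0"
proof -
  have "cf v0 \<in> {-K-1..K+1} \<and> sol (cf v0) v0 1 = v0"
    unfolding cf_def by (rule someI_ex) (use ex_c in blast)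
  then show "cf v0 \<in> {-K-1..K+1}" "sol (cf v0) v0 1 = v0" by auto
qed

lemma cf_cont:
  assumes e: "e > 0"
  shows "\<exists>d>0. \<forall>v0'. \<bar>v0' - v0\<bar> < d \<longrightarrow> \<bar>cf v0' - cf v0\<bar> < e"
proof -
  define c0 where "c0 = cf v0"
  define E where "E = exp (3 * L)"
  have E: "E > 0" by (simp add: E_def)
  define a1 where "a1 = sol (c0 - e) v0 1"
  define a2 where "a2 = sol (c0 + e) v0 1"
  have a1: "a1 < v0" unfolding a1_def using sol_strict[of "c0 - e" c0 1 v0] cf(2)[of v0] e
    by (simp add: c0_def)
  have a2: "v0 < a2" unfolding a2_def using sol_strict[of c0 "c0 + e" 1 v0] cf(2)[of v0] e
    by (simp add: c0_def)
  define gap where "gap = min (v0 - a1) (a2 - v0)"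
  have gap: "gap > 0" using a1 a2 by (simp add: gap_def)
  define d where "d = gap / (2 * (E + 1))"
  have d: "d > 0" using gap E by (simp add: d_def)
  have dE: "d * (E + 1) = gap / 2" using E by (simp add: d_def field_simps)
  then have dE': "d * E + d = gap / 2" by (simp add: algebra_simps)
  show ?thesis
  proof (intro exI conjI allI impI)
    show "d > 0" by (rule d)
    fix v0' assume v: "\<bar>v0' - v0\<bar> < d"
    have b1: "\<bar>sol (c0 - e) v0' 1 - a1\<bar> \<le> \<bar>v0' - v0\<bar> * E"
      unfolding a1_def E_def using sol_1_lip[of "c0 - e" v0' "c0 - e" v0] by simp
    have b2: "\<bar>sol (c0 + e) v0' 1 - a2\<bar> \<le> \<bar>v0' - v0\<bar> * E"
      unfolding a2_def E_def using sol_1_lip[of "c0 + e" v0' "c0 + e" v0] by simp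
    have vE: "\<bar>v0' - v0\<bar> * E \<le> d * E" using v E by (intro mult_right_mono) auto
    have lo: "sol (c0 - e) v0' 1 < v0'"
    proof -
      have "sol (c0 - e) v0' 1 \<le> a1 + d * E" using b1 vE by linarith
      also have "\<dots> \<le> v0 - gap + d * E" using gap_def by (simp add: min_def split: if_splits)
      also have "\<dots> < v0' + (gap / 2 - gap)" using v dE' gap by (simp add: abs_less_iff; linarith)
      finally show ?thesis using gap by linarith
    qed
    have hi: "v0' < sol (c0 + e) v0' 1"
    proof -
      have "a2 - d * E \<le> sol (c0 + e) v0' 1" using b2 vE by linarith
      moreover have "v0 + gap - d * E \<le> a2 - d * E" using gap_def by (simp add: min_def split: if_splits)
      moreover have "v0' + (gap - gap / 2) < v0 + gap - d * E" using v dE' gap by (simp add: abs_less_iff; linarith)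
      ultimately show ?thesis using gap by linarith
    qed
    define c' where "c' = cf v0'"
    have c': "sol c' v0' 1 = v0'" using cf(2)[of v0'] by (simp add: c'_def)
    have g1: "c0 - e < c'"
    proof (rule ccontr)
      assume "\<not> c0 - e < c'"
      then have "sol c' v0' 1 \<le> sol (c0 - e) v0' 1" by (intro sol_le) auto
      then show False using lo c' by linarith
    qed
    have g2: "c' < c0 + e"
    proof (rule ccontr)
      assume "\<not> c' < c0 + e"
      then have "sol (c0 + e) v0' 1 \<le> sol c' v0' 1" by (intro sol_le) auto
      then show False using hi c' by linarith
    qed
    show "\<bar>cf v0' - cf v0\<bar> < e" using g1 g2 by (simp add: c'_def c0_def abs_less_iff; linarith)
  qed
qed

definition m :: "real \<Rightarrow> real" where "m v0 = integral {0..1} (sol (cf v0) v0)"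

lemma int_diff_bound:
  fixes f g :: "real \<Rightarrow> real"
  assumes "continuous_on {0..1} f" "continuous_on {0..1} g" "\<And>t. t \<in> {0..1} \<Longrightarrow> \<bar>f t - g t\<bar> \<le> B"
  shows "\<bar>integral {0..1} f - integral {0..1} g\<bar> \<le> B"
proof -
  have "integral {0..1} f - integral {0..1} g = integral {0..1} (\<lambda>t. f t - g t)"
    by (rule integral_diff[symmetric]) (auto intro!: integrable_continuous_real assms(1,2))
  moreover have "norm (integral {0..1} (\<lambda>t. f t - g t)) \<le> B * (1 - 0)"
    by (rule integral_bound) (use assms in \<open>auto intro!: continuous_intros\<close>)
  ultimately show ?thesis by simp
qed

lemma m_bnd: "\<bar>m v0 - v0\<bar> \<le> 2 * K + 1"
proof -
  have "\<bar>m v0 - integral {0..1} (\<lambda>_::real. v0)\<bar> \<le> 2 * K + 1"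
    unfolding m_def
  proof (rule int_diff_bound[of "sol (cf v0) v0" "\<lambda>_. v0"])
    show "continuous_on {0..1} (sol (cf v0) v0)" by (rule sol_cont)
    fix t :: real assume t: "t \<in> {0..1}"
    have "\<bar>sol (cf v0) v0 t - v0\<bar> \<le> (\<bar>cf v0\<bar> + K) * t" by (rule sol_bnd) (use t in auto)
    also have "\<dots> \<le> (2 * K + 1) * 1"
      using t cf(1)[of v0] K0 by (intro mult_mono) (auto simp: abs_le_iff)
    finally show "\<bar>sol (cf v0) v0 t - v0\<bar> \<le> 2 * K + 1" by simp
  qed auto
  then show ?thesis by simp
qed

lemma m_cont: "continuous_on UNIV m"
  unfolding continuous_on_iff
proof (intro ballI allI impI)
  fix v0 e :: real assume e: "e > 0"
  define E where "E = exp (3 * L)"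
  have E: "E > 0" by (simp add: E_def)
  obtain dc where dc: "dc > 0" "\<And>v0'. \<bar>v0' - v0\<bar> < dc \<Longrightarrow> \<bar>cf v0' - cf v0\<bar> < e / (8 * E)"
    using cf_cont[of "e / (8 * E)" v0] e E by auto
  define d where "d = min dc (e / (4 * E))"
  show "\<exists>d>0. \<forall>x'\<in>UNIV. dist x' v0 < d \<longrightarrow> dist (m x') (m v0) < e"
  proof (intro exI conjI ballI impI)
    show "d > 0" using dc e E by (simp add: d_def)
    fix v0' assume "dist v0' v0 < d"
    then have v: "\<bar>v0' - v0\<bar> < dc" "\<bar>v0' - v0\<bar> < e / (4 * E)" by (auto simp: d_def dist_real_def)
    have c: "\<bar>cf v0' - cf v0\<bar> < e / (8 * E)" using dc(2)[OF v(1)] .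
    define B where "B = (\<bar>v0' - v0\<bar> + 3 * \<bar>cf v0' - cf v0\<bar>) * E"
    have "\<bar>m v0' - m v0\<bar> \<le> B" unfolding m_def
      by (rule int_diff_bound) (auto intro!: sol_cont sol_dep simp: B_def E_def)
    also have "B < (e / (4 * E) + 3 * (e / (8 * E))) * E"
      unfolding B_def using v c E by (intro mult_strict_right_mono) auto
    also have "\<dots> = 5 * e / 8" using E by (simp add: field_simps)
    also have "\<dots> < e" using e by simp
    finally show "dist (m v0') (m v0) < e" by (simp add: dist_real_def)
  qed
qed

lemma ex_v0: "\<exists>v0. m v0 = \<theta>"
proof -
  define D where "D = 2 * K + 1"
  have "\<exists>x. \<theta> - D \<le> x \<and> x \<le> \<theta> + D \<and> m x = \<theta>"
  proof (rule IVT')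
    show "m (\<theta> - D) \<le> \<theta>" using m_bnd[of "\<theta> - D"] by (simp add: D_def)
    show "\<theta> \<le> m (\<theta> + D)" using m_bnd[of "\<theta> + D"] by (simp add: D_def)
    show "\<theta> - D \<le> \<theta> + D" using K0 by (simp add: D_def)
    show "continuous_on {\<theta> - D..\<theta> + D} m" using m_cont by (rule continuous_on_subset) auto
  qed
  then show ?thesis by auto
qed

end


context gsys
begin

lemma exist_periodic: "\<exists>c F F1 F2. periodic_C2 F F1 F2 \<and> (\<forall>x. F2 x + G (\<theta> + F1 x) x = c)"
proof -
  obtain v0 where mv: "m v0 = \<theta>" using ex_v0 by blast
  define c where "c = cf v0"
  define v where "v = sol c v0"
  have vc: "continuous_on S v" for S unfolding v_def by (rule sol_cont)
  have dv: "\<And>t. t \<in> {0<..<3} \<Longrightarrow> (v has_real_derivative c - G (v t) t) (at t)"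
    unfolding v_def by (rule sol_der_at)
  have v10: "v 1 = v 0" using cf(2)[of v0] sol0[of c v0] by (simp add: v_def c_def)
  have lipG: "\<And>t u w. \<bar>(c - G u t) - (c - G w t)\<bar> \<le> L * \<bar>u - w\<bar>"
    using Gl by (simp add: abs_minus_commute)
  have vper: "v (t + 1) = v t" if t: "t \<in> {0..2}" for t
  proof (rule uniq_ode[of 2 "\<lambda>t. v (t + 1)" v "\<lambda>t u. c - G u t" L, OF _ _ _ _ _ lipG L0 _ t])
    show "continuous_on {0..2} (\<lambda>t. v (t + 1))"
      by (rule continuous_on_compose2[OF vc[of UNIV]]) (auto intro!: continuous_intros)
    fix s :: real assume s: "s \<in> {0<..<2}"
    have "(v has_real_derivative c - G (v (s + 1)) (s + 1)) (at (s + 1))"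
      by (rule dv) (use s in auto)
    then have "((\<lambda>t. v (t + 1)) has_real_derivative c - G (v (s + 1)) (s + 1)) (at s)"
      by (rule DERIV_shift[THEN iffD1])
    then show "((\<lambda>t. v (t + 1)) has_real_derivative c - G (v (s + 1)) s) (at s)"
      by (simp add: Gp)
    show "(v has_real_derivative c - G (v s) s) (at s)" by (rule dv) (use s in auto)
  qed (use v10 vc in auto)
  define \<Phi> where "\<Phi> = (\<lambda>t. integral {0..t} (\<lambda>s. v s - \<theta>))"
  have gc: "continuous_on {0..3} (\<lambda>s. v s - \<theta>)" by (intro continuous_intros vc)
  have \<Phi>c: "continuous_on {0..3} \<Phi>" unfolding \<Phi>_def by (rule int_cont[OF gc])
  have d\<Phi>: "(\<Phi> has_real_derivative v t - \<theta>) (at t)" if t: "t \<in> {0<..<3}" for t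
  proof -
    have "(\<Phi> has_real_derivative v t - \<theta>) (at t within {0..3})"
      unfolding \<Phi>_def by (rule int_deriv[OF gc]) (use t in auto)
    then show ?thesis using t by (simp add: at_within_Icc_at)
  qed
  have \<Phi>0: "\<Phi> 0 = 0" by (simp add: \<Phi>_def)
  have \<Phi>1: "\<Phi> 1 = 0"
  proof -
    have "\<Phi> 1 = integral {0..1} v - integral {0..1} (\<lambda>_::real. \<theta>)"
      unfolding \<Phi>_def
      by (rule integral_diff) (auto intro!: integrable_continuous_real vc)
    also have "integral {0..1} v = \<theta>" using mv by (simp add: m_def v_def c_def)
    finally show ?thesis by simp
  qed
  have \<Phi>per: "\<Phi> (t + 1) = \<Phi> t" if t: "t \<in> {0..2}" for t
  proof (rule uniq_ode[of 2 "\<lambda>t. \<Phi> (t + 1)" \<Phi> "\<lambda>t u. v t - \<theta>" 0, OF _ _ _ _ _ _ _ _ t])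
    show "continuous_on {0..2} (\<lambda>t. \<Phi> (t + 1))"
      by (rule continuous_on_compose2[OF \<Phi>c]) (auto intro!: continuous_intros)
    show "continuous_on {0..2} \<Phi>" by (rule continuous_on_subset[OF \<Phi>c]) auto
    fix s :: real assume s: "s \<in> {0<..<2}"
    have "(\<Phi> has_real_derivative v (s + 1) - \<theta>) (at (s + 1))"
      by (rule d\<Phi>) (use s in auto)
    then have "((\<lambda>t. \<Phi> (t + 1)) has_real_derivative v (s + 1) - \<theta>) (at s)"
      by (rule DERIV_shift[THEN iffD1])
    then show "((\<lambda>t. \<Phi> (t + 1)) has_real_derivative v s - \<theta>) (at s)"
      using vper[of s] s by simp
    show "(\<Phi> has_real_derivative v s - \<theta>) (at s)" by (rule d\<Phi>) (use s in auto)
  qed (use \<Phi>0 \<Phi>1 in auto)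
  define V where "V = (\<lambda>x. v (frac x + 1))"
  define F where "F = (\<lambda>x. \<Phi> (frac x + 1))"
  define F1 where "F1 = (\<lambda>x. V x - \<theta>)"
  define F2 where "F2 = (\<lambda>x. c - G (V x) x)"
  have dV: "(V has_real_derivative F2 x) (at x)" for x
  proof -
    have "((\<lambda>x. v (frac x + 1)) has_real_derivative (\<lambda>t. c - G (v t) t) (frac x + 1)) (at x)"
    proof (rule patch_deriv)
      show "\<And>t. t \<in> {0<..<3} \<Longrightarrow> (v has_real_derivative c - G (v t) t) (at t)" by (rule dv)
      show "\<And>t. t \<in> {0..2} \<Longrightarrow> v (t + 1) = v t" by (rule vper)
      show "\<And>t. t \<in> {0..2} \<Longrightarrow> c - G (v (t + 1)) (t + 1) = c - G (v t) t"
        using vper by (simp add: Gp)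
    qed
    then show ?thesis by (simp add: V_def F2_def G_frac)
  qed
  have dF: "(F has_real_derivative F1 x) (at x)" for x
  proof -
    have "((\<lambda>x. \<Phi> (frac x + 1)) has_real_derivative (\<lambda>t. v t - \<theta>) (frac x + 1)) (at x)"
    proof (rule patch_deriv)
      show "\<And>t. t \<in> {0<..<3} \<Longrightarrow> (\<Phi> has_real_derivative v t - \<theta>) (at t)" by (rule d\<Phi>)
      show "\<And>t. t \<in> {0..2} \<Longrightarrow> \<Phi> (t + 1) = \<Phi> t" by (rule \<Phi>per)
      show "\<And>t. t \<in> {0..2} \<Longrightarrow> v (t + 1) - \<theta> = v t - \<theta>" using vper by simp
    qed
    then show ?thesis by (simp add: F_def F1_def V_def)
  qed
  have dF1: "(F1 has_real_derivative F2 x) (at x)" for x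
    unfolding F1_def using DERIV_diff[OF dV[of x] DERIV_const[of \<theta> "at x"]] by simp
  have Vc: "continuous_on UNIV V" using dV by (intro has_real_derivative_imp_continuous_on) blast
  have F2c: "continuous_on UNIV F2" unfolding F2_def
    by (intro continuous_intros G_comp_cont Vc continuous_on_id)
  have Fper: "\<forall>x. F (x + 1) = F x" by (simp add: F_def frac_1_eq)
  have "periodic_C2 F F1 F2" unfolding periodic_C2_def using Fper dF dF1 F2c by blast
  moreover have "\<forall>x. F2 x + G (\<theta> + F1 x) x = c" by (simp add: F1_def F2_def)
  ultimately show ?thesis by blast
qed

end


lemma per_int:
  fixes f :: "real \<Rightarrow> 'a"
  assumes per: "\<And>x. f (x + 1) = f x"
  shows "f (x + of_int k) = f x"
proof (induction k rule: int_induct[where k=0])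
  case base then show ?case by simp
next
  case (step1 i)
  have e: "x + of_int (i + 1) = (x + of_int i) + 1" by simp
  show ?case by (simp only: e per step1)
next
  case (step2 i)
  have e: "(x + of_int (i - 1)) + 1 = x + of_int i" by simp
  have "f (x + of_int (i - 1)) = f ((x + of_int (i - 1)) + 1)" by (rule per[symmetric])
  also have "\<dots> = f (x + of_int i)" by (simp only: e)
  finally show ?case using step2 by simp
qed

lemma per_frac:
  fixes f :: "real \<Rightarrow> 'a"
  assumes per: "\<And>x. f (x + 1) = f x"
  shows "f (frac x) = f x"
proof -
  have e: "frac x = x + of_int (- \<lfloor>x\<rfloor>)" by (simp add: frac_def)
  show ?thesis by (simp only: e per_int[of f, OF per])
qed

lemma pc2_F1_der: "periodic_C2 F F1 F2 \<Longrightarrow> (F1 has_real_derivative F2 x) (at x)"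
  by (simp add: periodic_C2_def)

lemma pc2_F_der: "periodic_C2 F F1 F2 \<Longrightarrow> (F has_real_derivative F1 x) (at x)"
  by (simp add: periodic_C2_def)

lemma pc2_F1_per:
  assumes "periodic_C2 F F1 F2"
  shows "F1 (x + 1) = F1 x"
proof -
  have "(F has_real_derivative F1 (x + 1)) (at (x + 1))" by (rule pc2_F_der[OF assms])
  then have "((\<lambda>x. F (x + 1)) has_real_derivative F1 (x + 1)) (at x)"
    by (rule DERIV_shift[THEN iffD1])
  moreover have "(\<lambda>x. F (x + 1)) = F" using assms by (simp add: periodic_C2_def)
  ultimately have "(F has_real_derivative F1 (x + 1)) (at x)" by simp
  then show ?thesis using pc2_F_der[OF assms, of x] by (rule DERIV_unique)
qed

lemma pc2_zero:
  assumes "periodic_C2 F F1 F2"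
  shows "\<exists>z. F1 z = 0"
proof -
  have F01: "F 0 = F 1" using assms by (simp add: periodic_C2_def) (metis add_0)
  have cont: "continuous_on {0..1} F"
    using pc2_F_der[OF assms] by (intro has_real_derivative_imp_continuous_on) blast
  obtain z where "0 < z" "z < 1" "(\<lambda>h. F1 z * h) = (\<lambda>v. 0)"
    using Rolle_deriv[of 0 1 F "\<lambda>x h. F1 x * h", OF _ F01 cont] pc2_F_der[OF assms]
    by (auto simp: has_field_derivative_def)
  then have "F1 z * 1 = 0" by (metis)
  then show ?thesis by auto
qed

lemma pc2_no_zero_contra:
  assumes "periodic_C2 F F1 F2" and zer: "\<And>x. F1 x = 0 \<Longrightarrow> 0 < F2 x"
  shows False
proof -
  obtain z where z: "F1 z = 0" using pc2_zero[OF assms(1)] by blast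
  have "F1 z \<noteq> 0"
    by (rule periodic_no_zero[of F1 F2]) (use pc2_F1_der[OF assms(1)] pc2_F1_per[OF assms(1)] zer in auto)
  then show False using z by simp
qed

lemma pc2_diff:
  assumes "periodic_C2 Fa Fa1 Fa2" "periodic_C2 Fb Fb1 Fb2"
  shows "periodic_C2 (\<lambda>x. Fa x - Fb x) (\<lambda>x. Fa1 x - Fb1 x) (\<lambda>x. Fa2 x - Fb2 x)"
  using assms unfolding periodic_C2_def by (auto intro!: DERIV_diff continuous_intros)

lemma uniq_c:
  fixes H :: "real \<Rightarrow> real \<Rightarrow> real"
  assumes a: "periodic_C2 Fa Fa1 Fa2" "\<forall>x. Fa2 x + H (\<theta> + Fa1 x) x = ca"
    and b: "periodic_C2 Fb Fb1 Fb2" "\<forall>x. Fb2 x + H (\<theta> + Fb1 x) x = cb"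
    and lt: "cb < ca"
  shows False
proof (rule pc2_no_zero_contra[OF pc2_diff[OF a(1) b(1)]])
  fix x assume "Fa1 x - Fb1 x = 0"
  then have "Fa1 x = Fb1 x" by simp
  then show "0 < Fa2 x - Fb2 x" using a(2) b(2) lt by (metis add_diff_cancel_right' diff_less_eq diff_gt_0_iff_gt)
qed


lemma H_comp_cont:
  fixes H :: "real \<Rightarrow> real \<Rightarrow> real"
  assumes Hc: "continuous_on UNIV (\<lambda>(p, x). H p x)" and "continuous_on S a" "continuous_on S b"
  shows "continuous_on S (\<lambda>s. H (a s) (b s))"
proof -
  have "continuous_on S (\<lambda>s. (\<lambda>(p,x). H p x) (a s, b s))"
    by (rule continuous_on_compose2[OF Hc]) (auto intro!: continuous_intros assms)
  then show ?thesis by simp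
qed

theorem propositionC2:
  fixes H :: "real \<Rightarrow> real \<Rightarrow> real"
  assumes cont: "continuous_on UNIV (\<lambda>(p, x). H p x)"
    and coercive: "\<forall>M. \<exists>R. \<forall>p x. R \<le> \<bar>p\<bar> \<longrightarrow> M \<le> H p x"
    and periodic: "\<forall>p x. H p (x + 1) = H p x"
    and lip: "\<forall>B>0. \<exists>L. L-lipschitz_on ({-B..B} \<times> UNIV) (\<lambda>(p, x). H p x)"
  shows "\<exists>c. (\<exists>F F1 F2. periodic_C2 F F1 F2 \<and>
                  (\<forall>x. F2 x + H (\<theta> + F1 x) x = c) \<and>
                  (\<forall>x. p_minus H \<theta> \<le> \<theta> + F1 x \<and> \<theta> + F1 x \<le> p_plus H \<theta>)) \<and>
             (\<forall>c'. (\<exists>F F1 F2. periodic_C2 F F1 F2 \<and>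
                       (\<forall>x. F2 x + H (\<theta> + F1 x) x = c')) \<longrightarrow> c' = c)"
proof -
  define U where "U = U_max H \<theta>"
  have Hfrac: "\<And>p x. H p (frac x) = H p x"
    using per_frac[of "H _"] periodic by blast
  have frac01: "frac x \<in> {0..1}" for x :: real
  proof -
    have "frac x \<le> 1" using frac_lt_1[of x] by linarith
    then show ?thesis by simp
  qed
  have c\<theta>: "continuous_on {0..1} (\<lambda>x. H \<theta> x)"
    by (rule H_comp_cont[OF cont]) (auto intro!: continuous_intros)
  have bddU: "bdd_above ((\<lambda>x. H \<theta> x) ` {0..1})"
    by (rule bounded_imp_bdd_above[OF compact_imp_bounded[OF compact_continuous_image[OF c\<theta> compact_Icc]]])
  have HU01: "H \<theta> x \<le> U" if "x \<in> {0..1}" for x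
    unfolding U_def U_max_def by (rule cSUP_upper[OF that bddU])
  have HU: "H \<theta> x \<le> U" for x using HU01[OF frac01[of x]] Hfrac[of \<theta> x] by simp
  obtain R0 where R0: "\<forall>p x. R0 \<le> \<bar>p\<bar> \<longrightarrow> U + 1 \<le> H p x" using coercive by blast
  have small: "\<bar>p\<bar> < R0" if "H p x \<le> U" for p x
    using R0 that by (meson linorder_not_le add_le_same_cancel1 not_one_le_zero order_trans)
  define R1 where "R1 = \<bar>R0\<bar> + 1"
  have R1: "R1 > 0" "R0 < R1" by (auto simp: R1_def)
  have \<theta>R: "\<bar>\<theta>\<bar> < R0" using small[OF HU[of 0]] .
  obtain Lh where Lh: "Lh-lipschitz_on ({-R1..R1} \<times> UNIV) (\<lambda>(p, x). H p x)" using lip R1(1) by blast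
  have Lh0: "0 \<le> Lh" using Lh by (rule lipschitz_on_nonneg)
  define cl where "cl = (\<lambda>p::real. max (-R1) (min R1 p))"
  have cl_in: "cl p \<in> {-R1..R1}" for p using R1 by (auto simp: cl_def)
  have cl_id: "\<bar>p\<bar> \<le> R1 \<Longrightarrow> cl p = p" for p by (auto simp: cl_def)
  have cl_lip: "\<bar>cl p - cl q\<bar> \<le> \<bar>p - q\<bar>" for p q by (auto simp: cl_def max_def min_def)
  have cl_cont: "continuous_on S cl" for S unfolding cl_def by (intro continuous_intros)
  define G where "G = (\<lambda>p x. H (cl p) x)"
  have "compact ((\<lambda>(p, x). H p x) ` ({-R1..R1} \<times> {0..1}))"
    by (rule compact_continuous_image[OF continuous_on_subset[OF cont] compact_Times]) auto
  then obtain K where K: "\<forall>y\<in>(\<lambda>(p, x). H p x) ` ({-R1..R1} \<times> {0..1}). \<bar>y\<bar> \<le> K"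
    using compact_imp_bounded bounded_real by blast
  have Gb: "\<bar>G p x\<bar> \<le> K" for p x
  proof -
    have "(cl p, frac x) \<in> {-R1..R1} \<times> {0..1}" using cl_in frac01 by auto
    then have "\<bar>H (cl p) (frac x)\<bar> \<le> K" using K by force
    then show ?thesis by (simp add: G_def Hfrac)
  qed
  have Gl: "\<bar>G p x - G q x\<bar> \<le> Lh * \<bar>p - q\<bar>" for p q x
  proof -
    have "dist ((\<lambda>(p, x). H p x) (cl p, x)) ((\<lambda>(p, x). H p x) (cl q, x)) \<le> Lh * dist (cl p, x) (cl q, x)"
      by (rule lipschitz_onD[OF Lh]) (use cl_in in auto)
    then have "\<bar>G p x - G q x\<bar> \<le> Lh * \<bar>cl p - cl q\<bar>"
      by (simp add: G_def dist_Pair_Pair dist_real_def)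
    also have "\<dots> \<le> Lh * \<bar>p - q\<bar>" by (rule mult_left_mono[OF cl_lip Lh0])
    finally show ?thesis .
  qed
  have Gc: "continuous_on UNIV (\<lambda>(p, x). G p x)"
  proof -
    have "continuous_on UNIV (\<lambda>z::real\<times>real. H (cl (fst z)) (snd z))"
    proof (rule H_comp_cont[OF cont])
      show "continuous_on UNIV (\<lambda>z::real\<times>real. cl (fst z))"
        by (rule continuous_on_compose2[OF cl_cont[of UNIV]]) (auto intro!: continuous_intros)
      show "continuous_on UNIV (\<lambda>z::real\<times>real. snd z)" by (intro continuous_intros)
    qed
    moreover have "(\<lambda>(p, x). G p x) = (\<lambda>z::real\<times>real. H (cl (fst z)) (snd z))" by (auto simp: G_def)
    ultimately show ?thesis by simp
  qed
  have Gp: "G p (x + 1) = G p x" for p x using periodic by (simp add: G_def)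
  interpret gsys G K Lh
    by unfold_locales (use Gc Gb Lh0 Gl Gp in auto)
  obtain c F F1 F2 where pc: "periodic_C2 F F1 F2" and eqG: "\<forall>x. F2 x + G (\<theta> + F1 x) x = c"
    using exist_periodic[of \<theta>] by blast
  define w where "w = (\<lambda>x. \<theta> + F1 x)"
  have wper: "w (x + 1) = w x" for x using pc2_F1_per[OF pc] by (simp add: w_def)
  have wfrac: "w (frac x) = w x" for x using per_frac[of w, OF wper] .
  have dw: "(w has_real_derivative F2 x) (at x)" for x
    unfolding w_def using DERIV_add[OF DERIV_const[of \<theta> "at x"] pc2_F1_der[OF pc, of x]] by simp
  have wc: "continuous_on S w" for S using dw by (intro has_real_derivative_imp_continuous_on) blast
  have cU: "c \<le> U"
  proof (rule ccontr)
    assume "\<not> c \<le> U"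
    show False
    proof (rule pc2_no_zero_contra[OF pc])
      fix x assume "F1 x = 0"
      moreover have "cl \<theta> = \<theta>" using \<theta>R R1 by (intro cl_id) simp
      ultimately have "F2 x = c - H \<theta> x" using eqG[rule_format, of x] by (simp add: G_def)
      then show "0 < F2 x" using HU[of x] \<open>\<not> c \<le> U\<close> by linarith
    qed
  qed
  obtain x0 where x0: "x0 \<in> {0..1}" "\<And>y. y \<in> {0..1} \<Longrightarrow> w y \<le> w x0"
    using continuous_attains_sup[OF compact_Icc _ wc, of 0 1] by auto
  have wmax: "w y \<le> w x0" for y using x0(2)[OF frac01[of y]] wfrac[of y] by simp
  obtain x1 where x1: "x1 \<in> {0..1}" "\<And>y. y \<in> {0..1} \<Longrightarrow> w x1 \<le> w y"
    using continuous_attains_inf[OF compact_Icc _ wc, of 0 1] by auto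
  have wmin: "w x1 \<le> w y" for y using x1(2)[OF frac01[of y]] wfrac[of y] by simp
  have F2x0: "F2 x0 = 0" by (rule DERIV_local_max[OF dw, of 1]) (use wmax in auto)
  have F2x1: "F2 x1 = 0" by (rule DERIV_local_min[OF dw, of 1]) (use wmin in auto)
  have key: "\<bar>w z\<bar> < R0 \<and> H (w z) z \<le> U" if "F2 z = 0" for z
  proof -
    have "H (cl (w z)) z \<le> U" using eqG[rule_format, of z] that cU by (simp add: G_def w_def)
    then have s: "\<bar>cl (w z)\<bar> < R0" by (rule small)
    have "\<bar>w z\<bar> \<le> R1"
    proof (rule ccontr)
      assume "\<not> \<bar>w z\<bar> \<le> R1"
      then have "\<bar>cl (w z)\<bar> = R1" using R1 by (auto simp: cl_def max_def min_def)
      then show False using s R1 by linarith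
    qed
    then have "cl (w z) = w z" by (rule cl_id)
    then show ?thesis using s \<open>H (cl (w z)) z \<le> U\<close> by simp
  qed
  have k0: "\<bar>w x0\<bar> < R0" "H (w x0) x0 \<le> U" using key[OF F2x0] by auto
  have k1: "\<bar>w x1\<bar> < R0" "H (w x1) x1 \<le> U" using key[OF F2x1] by auto
  have wR: "\<bar>w y\<bar> < R0" for y using wmax[of y] wmin[of y] k0 k1 by (simp add: abs_less_iff)
  have eqH: "\<forall>x. F2 x + H (\<theta> + F1 x) x = c"
  proof
    fix x
    have "cl (w x) = w x" using wR[of x] R1 by (intro cl_id) simp
    then show "F2 x + H (\<theta> + F1 x) x = c" using eqG[rule_format, of x] by (simp add: G_def w_def)
  qed
  define S where "S = (\<lambda>x. {p. H p x \<le> U})"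
  have S_mem: "\<theta> \<in> S x" if "x \<in> {0..1}" for x using HU by (simp add: S_def)
  have S_bd: "p \<in> S x \<Longrightarrow> \<bar>p\<bar> < R0" for p x using small by (auto simp: S_def)
  have S_up: "p \<le> R0" and S_lo: "- R0 \<le> p" if "p \<in> S x" for p x
    using S_bd[OF that] by linarith+
  have bddA: "bdd_above (S x)" for x using S_up by (intro bdd_aboveI[of _ R0]) blast
  have bddB: "bdd_below (S x)" for x using S_lo by (intro bdd_belowI[of _ "-R0"]) blast
  have SupS: "Sup (S x) \<le> R0" if "x \<in> {0..1}" for x
    using S_mem[OF that] S_up by (intro cSup_least) blast+
  have InfS: "- R0 \<le> Inf (S x)" if "x \<in> {0..1}" for x
    using S_mem[OF that] S_lo by (intro cInf_greatest) blast+
  have pplus: "p_plus H \<theta> = Sup ((\<lambda>x. Sup (S x)) ` {0..1})" by (simp add: p_plus_def S_def U_def)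
  have pminus: "p_minus H \<theta> = Inf ((\<lambda>x. Inf (S x)) ` {0..1})" by (simp add: p_minus_def S_def U_def)
  have up: "w x0 \<le> p_plus H \<theta>"
  proof -
    have "w x0 \<le> Sup (S x0)" by (rule cSup_upper[OF _ bddA]) (use k0 in \<open>simp add: S_def\<close>)
    also have "\<dots> \<le> Sup ((\<lambda>x. Sup (S x)) ` {0..1})"
      by (rule cSUP_upper[OF x0(1)]) (use SupS in \<open>auto intro!: bdd_aboveI[of _ R0]\<close>)
    finally show ?thesis by (simp add: pplus)
  qed
  have lo: "p_minus H \<theta> \<le> w x1"
  proof -
    have "Inf ((\<lambda>x. Inf (S x)) ` {0..1}) \<le> Inf (S x1)"
      by (rule cINF_lower[OF _ x1(1)]) (use InfS in \<open>auto intro!: bdd_belowI[of _ "-R0"]\<close>)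
    also have "\<dots> \<le> w x1" by (rule cInf_lower[OF _ bddB]) (use k1 in \<open>simp add: S_def\<close>)
    finally show ?thesis by (simp add: pminus)
  qed
  have bounds: "\<forall>x. p_minus H \<theta> \<le> \<theta> + F1 x \<and> \<theta> + F1 x \<le> p_plus H \<theta>"
  proof
    fix x
    show "p_minus H \<theta> \<le> \<theta> + F1 x \<and> \<theta> + F1 x \<le> p_plus H \<theta>"
      using wmax[of x] wmin[of x] up lo unfolding w_def by linarith
  qed
  show ?thesis
  proof (rule exI[of _ c], rule conjI)
    show "\<exists>F F1 F2. periodic_C2 F F1 F2 \<and> (\<forall>x. F2 x + H (\<theta> + F1 x) x = c) \<and>
            (\<forall>x. p_minus H \<theta> \<le> \<theta> + F1 x \<and> \<theta> + F1 x \<le> p_plus H \<theta>)"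
      using pc eqH bounds by blast
  next
    show "\<forall>c'. (\<exists>F F1 F2. periodic_C2 F F1 F2 \<and> (\<forall>x. F2 x + H (\<theta> + F1 x) x = c')) \<longrightarrow> c' = c"
    proof (intro allI impI)
    fix c' assume "\<exists>F F1 F2. periodic_C2 F F1 F2 \<and> (\<forall>x. F2 x + H (\<theta> + F1 x) x = c')"
    then obtain Fb Fb1 Fb2 where b: "periodic_C2 Fb Fb1 Fb2" "\<forall>x. Fb2 x + H (\<theta> + Fb1 x) x = c'" by blast
    show "c' = c"
    proof (rule linorder_cases[of c' c])
      assume "c' < c" then show ?thesis using uniq_c[OF pc eqH b] by blast
    next
      assume "c < c'" then show ?thesis using uniq_c[OF b pc eqH] by blast
    qed
    qed
  qed
qed


end
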